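(* Let $R$ be a Noetherian ring, $A$ an $R$-module and $B$ an $R$-submodule of $A$. If $\mathrm{sr}_R(B)$ and $\mathrm{sr}_R(A/B)$ are finite, then $\mathrm{sr}_R(A)\le\mathrm{sr}_R(B)+\mathrm{sr}_R(A/B)$.
   Context: A generating subset of an $R$-submodule is minimal if no proper subset of it generates that submodule. An $R$-module $M$ has special rank $\mathrm{sr}_R(M)=r$ if every finitely generated $R$-submodule of $M$ can be generated by $r$ elements and some finitely generated $R$-submodule of $M$ has a minimal generating subset of exactly $r$ elements. *)

theory Defs
  imports "HOL-Algebra.Algebra" "HOL-Library.Extended_Nat"
begin

definition mspan :: "('a, 'c) ring_scheme \<Rightarrow> ('a, 'b, 'd) module_scheme \<Rightarrow> 'b set \<Rightarrow> 'b set" where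
  "mspan R M S = \<Inter>{N. submodule N R M \<and> S \<subseteq> N}"

definition generates :: "('a, 'c) ring_scheme \<Rightarrow> ('a, 'b, 'd) module_scheme \<Rightarrow> 'b set \<Rightarrow> 'b set \<Rightarrow> bool" where
  "generates R M S N \<longleftrightarrow> S \<subseteq> N \<and> mspan R M S = N"

definition fg_submodule :: "('a, 'c) ring_scheme \<Rightarrow> ('a, 'b, 'd) module_scheme \<Rightarrow> 'b set \<Rightarrow> bool" where
  "fg_submodule R M N \<longleftrightarrow> submodule N R M \<and> (\<exists>S. finite S \<and> generates R M S N)"

definition minimal_generating :: "('a, 'c) ring_scheme \<Rightarrow> ('a, 'b, 'd) module_scheme \<Rightarrow> 'b set \<Rightarrow> 'b set \<Rightarrow> bool" where
  "minimal_generating R M S N \<longleftrightarrow> generates R M S N \<and> (\<forall>T. T \<subset> S \<longrightarrow> \<not> generates R M T N)"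

definition has_special_rank :: "('a, 'c) ring_scheme \<Rightarrow> ('a, 'b, 'd) module_scheme \<Rightarrow> nat \<Rightarrow> bool" where
  "has_special_rank R M r \<longleftrightarrow>
     (\<forall>N. fg_submodule R M N \<longrightarrow> (\<exists>S. finite S \<and> card S \<le> r \<and> generates R M S N)) \<and>
     (\<exists>N S. fg_submodule R M N \<and> minimal_generating R M S N \<and> finite S \<and> card S = r)"

definition special_rank :: "('a, 'c) ring_scheme \<Rightarrow> ('a, 'b, 'd) module_scheme \<Rightarrow> enat" where
  "special_rank R M = (if \<exists>r. has_special_rank R M r
                        then enat (LEAST r. has_special_rank R M r) else \<infinity>)"

definition submod :: "('a, 'b, 'd) module_scheme \<Rightarrow> 'b set \<Rightarrow> ('a, 'b, 'd) module_scheme" where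
  "submod M N = M\<lparr>carrier := N\<rparr>"

definition quot_module :: "('a, 'c) ring_scheme \<Rightarrow> ('a, 'b, 'd) module_scheme \<Rightarrow> 'b set \<Rightarrow> ('a, 'b set) module" where
  "quot_module R M N =
    \<lparr>carrier = A_RCOSETS M N,
     monoid.mult = (\<lambda>_ _. undefined),
     one = undefined,
     ring.zero = N,
     ring.add = set_add M,
     module.smult = (\<lambda>a Y. \<Union>y\<in>Y. a_r_coset M N (smult M a y))\<rparr>"

end

theory Submission
  imports Defs
begin


lemma submodule_Inter:
  assumes "F \<noteq> {}" "\<And>N. N \<in> F \<Longrightarrow> submodule N R M"
  shows "submodule (\<Inter>F) R M"
proof (intro submodule.intro subgroup.intro submodule_axioms.intro)
  have sg: "\<And>N. N \<in> F \<Longrightarrow> subgroup N (add_monoid M)"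
    by (rule submodule.axioms(1)[OF assms(2)])
  have sm: "\<And>N a x. N \<in> F \<Longrightarrow> a \<in> carrier R \<Longrightarrow> x \<in> N \<Longrightarrow> a \<odot>\<^bsub>M\<^esub> x \<in> N"
    by (rule submodule.smult_closed[OF assms(2)])
  obtain N0 where N0: "N0 \<in> F" using assms(1) by blast
  show "\<Inter>F \<subseteq> carrier (add_monoid M)"
    using subgroup.subset[OF sg[OF N0]] N0 by blast
  show "x \<otimes>\<^bsub>add_monoid M\<^esub> y \<in> \<Inter>F" if "x \<in> \<Inter>F" "y \<in> \<Inter>F" for x y
    using that subgroup.m_closed[OF sg] by blast
  show "\<one>\<^bsub>add_monoid M\<^esub> \<in> \<Inter>F"
    using subgroup.one_closed[OF sg] by blast
  show "inv\<^bsub>add_monoid M\<^esub> x \<in> \<Inter>F" if "x \<in> \<Inter>F" for x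
    using that subgroup.m_inv_closed[OF sg] by blast
  show "a \<odot>\<^bsub>M\<^esub> x \<in> \<Inter>F" if "a \<in> carrier R" "x \<in> \<Inter>F" for a x
    using that sm by blast
qed

lemma mspan_super: "S \<subseteq> mspan R M S"
  unfolding mspan_def by blast

lemma mspan_least: "submodule N R M \<Longrightarrow> S \<subseteq> N \<Longrightarrow> mspan R M S \<subseteq> N"
  unfolding mspan_def by blast

lemma mspan_mono: "S \<subseteq> T \<Longrightarrow> mspan R M S \<subseteq> mspan R M T"
  unfolding mspan_def by blast

lemma mspan_submodule: "submodule N R M \<Longrightarrow> S \<subseteq> N \<Longrightarrow> submodule (mspan R M S) R M"
  unfolding mspan_def by (rule submodule_Inter) auto

lemma mspan_of_submodule: "submodule N R M \<Longrightarrow> mspan R M N = N"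
  by (rule equalityI[OF mspan_least[OF _ order_refl] mspan_super])

context module
begin

lemma mspan_sub_carrier: "S \<subseteq> carrier M \<Longrightarrow> submodule (mspan R M S) R M"
  by (rule mspan_submodule[OF carrier_is_submodule])

lemma mspan_carrier: "S \<subseteq> carrier M \<Longrightarrow> mspan R M S \<subseteq> carrier M"
  by (rule mspan_least[OF carrier_is_submodule])

lemma sub_carrier: "submodule N R M \<Longrightarrow> x \<in> N \<Longrightarrow> x \<in> carrier M"
  using submoduleE(1)[of N] by (rule subsetD)

lemma submodule_zero: "submodule N R M \<Longrightarrow> \<zero>\<^bsub>M\<^esub> \<in> N"
  using subgroup.one_closed[OF submodule.axioms(1), of N R M] by simp

lemma inRI: "a \<in> carrier R \<Longrightarrow> y \<in> P \<Longrightarrow> v = a \<odot>\<^bsub>M\<^esub> x \<oplus>\<^bsub>M\<^esub> y \<Longrightarrow>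
   v \<in> {a \<odot>\<^bsub>M\<^esub> x \<oplus>\<^bsub>M\<^esub> y | a y. a \<in> carrier R \<and> y \<in> P}"
  by auto

lemma mspan_insert:
  assumes x: "x \<in> carrier M" and S: "S \<subseteq> carrier M"
  shows "mspan R M (insert x S) = {a \<odot>\<^bsub>M\<^esub> x \<oplus>\<^bsub>M\<^esub> y | a y. a \<in> carrier R \<and> y \<in> mspan R M S}"
    (is "?L = ?R")
proof
  let ?P = "mspan R M S"
  have P: "submodule ?P R M" using mspan_sub_carrier[OF S] .
  have Pc: "\<And>y. y \<in> ?P \<Longrightarrow> y \<in> carrier M" using sub_carrier[OF P] .
  have z0: "\<zero>\<^bsub>M\<^esub> \<in> ?P" using submodule_zero[OF P] .
  have "submodule ?R R M"
  proof (rule submoduleI)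
    show "?R \<subseteq> carrier M"
    proof
      fix v assume "v \<in> ?R"
      then obtain a y where v: "v = a \<odot>\<^bsub>M\<^esub> x \<oplus>\<^bsub>M\<^esub> y" "a \<in> carrier R" "y \<in> ?P" by blast
      show "v \<in> carrier M" using v x Pc[OF v(3)] by simp
    qed
    have "\<zero>\<^bsub>M\<^esub> = \<zero> \<odot>\<^bsub>M\<^esub> x \<oplus>\<^bsub>M\<^esub> \<zero>\<^bsub>M\<^esub>" using x by simp
    then show "\<zero>\<^bsub>M\<^esub> \<in> ?R" by (rule inRI[OF R.zero_closed z0])
    show "\<ominus>\<^bsub>M\<^esub> v \<in> ?R" if h: "v \<in> ?R" for v
    proof -
      obtain a y where v: "v = a \<odot>\<^bsub>M\<^esub> x \<oplus>\<^bsub>M\<^esub> y" "a \<in> carrier R" "y \<in> ?P" using h(1) by blast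
      have "\<ominus>\<^bsub>M\<^esub> v = (\<ominus> a) \<odot>\<^bsub>M\<^esub> x \<oplus>\<^bsub>M\<^esub> (\<ominus>\<^bsub>M\<^esub> y)"
        using v x Pc[OF v(3)] by (simp add: smult_l_minus M.minus_add)
      moreover have "\<ominus>\<^bsub>M\<^esub> y \<in> ?P" using submoduleE(3)[OF P v(3)] .
      ultimately show ?thesis using v(2) by (intro inRI[OF R.a_inv_closed])
    qed
    show "v \<oplus>\<^bsub>M\<^esub> w \<in> ?R" if h: "v \<in> ?R" "w \<in> ?R" for v w
    proof -
      obtain a y where v: "v = a \<odot>\<^bsub>M\<^esub> x \<oplus>\<^bsub>M\<^esub> y" "a \<in> carrier R" "y \<in> ?P" using h(1) by blast
      obtain b z where w: "w = b \<odot>\<^bsub>M\<^esub> x \<oplus>\<^bsub>M\<^esub> z" "b \<in> carrier R" "z \<in> ?P" using h(2) by blast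
      have "v \<oplus>\<^bsub>M\<^esub> w = (a \<oplus> b) \<odot>\<^bsub>M\<^esub> x \<oplus>\<^bsub>M\<^esub> (y \<oplus>\<^bsub>M\<^esub> z)"
        using v w x Pc[OF v(3)] Pc[OF w(3)] by (simp add: smult_l_distr M.a_ac)
      moreover have "y \<oplus>\<^bsub>M\<^esub> z \<in> ?P" using submoduleE(5)[OF P v(3) w(3)] .
      ultimately show ?thesis using v(2) w(2) by (intro inRI[OF R.a_closed])
    qed
    show "c \<odot>\<^bsub>M\<^esub> v \<in> ?R" if h: "c \<in> carrier R" "v \<in> ?R" for c v
    proof -
      obtain a y where v: "v = a \<odot>\<^bsub>M\<^esub> x \<oplus>\<^bsub>M\<^esub> y" "a \<in> carrier R" "y \<in> ?P" using h(2) by blast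
      have "c \<odot>\<^bsub>M\<^esub> v = (c \<otimes> a) \<odot>\<^bsub>M\<^esub> x \<oplus>\<^bsub>M\<^esub> (c \<odot>\<^bsub>M\<^esub> y)"
        using v x Pc[OF v(3)] h by (simp add: smult_r_distr smult_assoc1)
      moreover have "c \<odot>\<^bsub>M\<^esub> y \<in> ?P" using submoduleE(4)[OF P h(1) v(3)] .
      ultimately show ?thesis using v(2) h(1) by (intro inRI[OF R.m_closed])
    qed
  qed
  moreover have "insert x S \<subseteq> ?R"
  proof
    fix v assume "v \<in> insert x S"
    then show "v \<in> ?R"
    proof
      assume "v = x"
      then have "v = \<one> \<odot>\<^bsub>M\<^esub> x \<oplus>\<^bsub>M\<^esub> \<zero>\<^bsub>M\<^esub>" using x by simp
      then show ?thesis by (rule inRI[OF R.one_closed z0])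
    next
      assume vS: "v \<in> S"
      then have "v = \<zero> \<odot>\<^bsub>M\<^esub> x \<oplus>\<^bsub>M\<^esub> v" using x S by auto
      moreover have "v \<in> ?P" using vS mspan_super[of S R M] by blast
      ultimately show ?thesis by (intro inRI[OF R.zero_closed])
    qed
  qed
  ultimately show "?L \<subseteq> ?R" by (rule mspan_least)
next
  have Q: "submodule ?L R M" using x S by (intro mspan_sub_carrier) simp
  have "x \<in> ?L" using mspan_super[of "insert x S" R M] by simp
  have "mspan R M S \<subseteq> ?L" by (rule mspan_mono) blast
  show "?R \<subseteq> ?L"
  proof
    fix v assume "v \<in> ?R"
    then obtain a y where v: "v = a \<odot>\<^bsub>M\<^esub> x \<oplus>\<^bsub>M\<^esub> y" "a \<in> carrier R" "y \<in> mspan R M S" by blast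
    have "a \<odot>\<^bsub>M\<^esub> x \<in> ?L" using submoduleE(4)[OF Q v(2) \<open>x \<in> ?L\<close>] .
    moreover have "y \<in> ?L" using v(3) \<open>mspan R M S \<subseteq> ?L\<close> by blast
    ultimately show "v \<in> ?L" using submoduleE(5)[OF Q] v(1) by simp
  qed
qed

end


context module
begin

lemma coef_ideal:
  assumes L: "submodule L R M" and x: "x \<in> carrier M" and S: "S \<subseteq> carrier M"
  shows "ideal {b \<in> carrier R. \<exists>y\<in>mspan R M S. b \<odot>\<^bsub>M\<^esub> x \<oplus>\<^bsub>M\<^esub> y \<in> L} R"
    (is "ideal ?I R")
proof -
  let ?P = "mspan R M S"
  have P: "submodule ?P R M" using mspan_sub_carrier[OF S] .
  have Pc: "\<And>y. y \<in> ?P \<Longrightarrow> y \<in> carrier M" using sub_carrier[OF P] .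
  have z0: "\<zero>\<^bsub>M\<^esub> \<in> ?P" using submodule_zero[OF P] .
  have sub: "subgroup ?I (add_monoid R)"
  proof (rule R.add.subgroupI)
    show "?I \<subseteq> carrier R" by auto
    have "\<zero> \<odot>\<^bsub>M\<^esub> x \<oplus>\<^bsub>M\<^esub> \<zero>\<^bsub>M\<^esub> \<in> L" using x submodule_zero[OF L] by simp
    then have "\<zero> \<in> ?I" using z0 by blast
    then show "?I \<noteq> {}" by blast
  next
    fix a assume "a \<in> ?I"
    then obtain y where a: "a \<in> carrier R" "y \<in> ?P" "a \<odot>\<^bsub>M\<^esub> x \<oplus>\<^bsub>M\<^esub> y \<in> L" by blast
    have "\<ominus>\<^bsub>M\<^esub> (a \<odot>\<^bsub>M\<^esub> x \<oplus>\<^bsub>M\<^esub> y) = (\<ominus> a) \<odot>\<^bsub>M\<^esub> x \<oplus>\<^bsub>M\<^esub> (\<ominus>\<^bsub>M\<^esub> y)"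
      using a x Pc[OF a(2)] by (simp add: smult_l_minus M.minus_add)
    moreover have "\<ominus>\<^bsub>M\<^esub> (a \<odot>\<^bsub>M\<^esub> x \<oplus>\<^bsub>M\<^esub> y) \<in> L" using submoduleE(3)[OF L a(3)] .
    moreover have "\<ominus>\<^bsub>M\<^esub> y \<in> ?P" using submoduleE(3)[OF P a(2)] .
    ultimately show "\<ominus> a \<in> ?I" using a(1) by auto
  next
    fix a b assume "a \<in> ?I" "b \<in> ?I"
    then obtain y z where a: "a \<in> carrier R" "y \<in> ?P" "a \<odot>\<^bsub>M\<^esub> x \<oplus>\<^bsub>M\<^esub> y \<in> L"
      and b: "b \<in> carrier R" "z \<in> ?P" "b \<odot>\<^bsub>M\<^esub> x \<oplus>\<^bsub>M\<^esub> z \<in> L" by blast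
    have "(a \<odot>\<^bsub>M\<^esub> x \<oplus>\<^bsub>M\<^esub> y) \<oplus>\<^bsub>M\<^esub> (b \<odot>\<^bsub>M\<^esub> x \<oplus>\<^bsub>M\<^esub> z) = (a \<oplus> b) \<odot>\<^bsub>M\<^esub> x \<oplus>\<^bsub>M\<^esub> (y \<oplus>\<^bsub>M\<^esub> z)"
      using a b x Pc[OF a(2)] Pc[OF b(2)] by (simp add: smult_l_distr M.a_ac)
    moreover have "(a \<odot>\<^bsub>M\<^esub> x \<oplus>\<^bsub>M\<^esub> y) \<oplus>\<^bsub>M\<^esub> (b \<odot>\<^bsub>M\<^esub> x \<oplus>\<^bsub>M\<^esub> z) \<in> L"
      using submoduleE(5)[OF L a(3) b(3)] .
    moreover have "y \<oplus>\<^bsub>M\<^esub> z \<in> ?P" using submoduleE(5)[OF P a(2) b(2)] .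
    ultimately show "a \<oplus> b \<in> ?I" using a(1) b(1) by auto
  qed
  have lc: "c \<otimes> a \<in> ?I" if hh: "a \<in> ?I" "c \<in> carrier R" for a c
  proof -
    obtain y where a: "a \<in> carrier R" "y \<in> ?P" "a \<odot>\<^bsub>M\<^esub> x \<oplus>\<^bsub>M\<^esub> y \<in> L" using hh(1) by blast
    have "c \<odot>\<^bsub>M\<^esub> (a \<odot>\<^bsub>M\<^esub> x \<oplus>\<^bsub>M\<^esub> y) = (c \<otimes> a) \<odot>\<^bsub>M\<^esub> x \<oplus>\<^bsub>M\<^esub> (c \<odot>\<^bsub>M\<^esub> y)"
      using a x Pc[OF a(2)] hh(2) by (simp add: smult_r_distr smult_assoc1)
    moreover have "c \<odot>\<^bsub>M\<^esub> (a \<odot>\<^bsub>M\<^esub> x \<oplus>\<^bsub>M\<^esub> y) \<in> L" using submoduleE(4)[OF L hh(2) a(3)] .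
    moreover have "c \<odot>\<^bsub>M\<^esub> y \<in> ?P" using submoduleE(4)[OF P hh(2) a(2)] .
    ultimately show "c \<otimes> a \<in> ?I" using a(1) hh(2) by auto
  qed
  show ?thesis
  proof (rule idealI[OF R.ring_axioms sub])
    fix a c assume "a \<in> ?I" "c \<in> carrier R"
    then show "c \<otimes> a \<in> ?I" by (rule lc)
  next
    fix a c assume h: "a \<in> ?I" "c \<in> carrier R"
    then have "a \<otimes> c = c \<otimes> a" using R.m_comm by auto
    then show "a \<otimes> c \<in> ?I" using lc[OF h] by simp
  qed
qed

end


context module
begin

lemma submodule_Int:
  assumes "submodule K R M" "submodule L R M"
  shows "submodule (K \<inter> L) R M"
proof -
  have "submodule (\<Inter>{K, L}) R M" using assms by (intro submodule_Inter) auto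
  then show ?thesis by simp
qed

lemma sub_diff:
  assumes "b \<in> carrier R" "x \<in> carrier M" "y \<in> carrier M" "y' \<in> carrier M"
  shows "(b \<odot>\<^bsub>M\<^esub> x \<oplus>\<^bsub>M\<^esub> y) \<oplus>\<^bsub>M\<^esub> \<ominus>\<^bsub>M\<^esub> (b \<odot>\<^bsub>M\<^esub> x \<oplus>\<^bsub>M\<^esub> y') = y \<oplus>\<^bsub>M\<^esub> \<ominus>\<^bsub>M\<^esub> y'"
proof -
  have bx: "b \<odot>\<^bsub>M\<^esub> x \<in> carrier M" using assms by simp
  show ?thesis using bx assms(3,4)
    by (simp add: M.minus_add M.a_ac M.r_neg1 M.r_neg)
qed

lemma noeth_fg:
  assumes noeth: "noetherian_ring R" and fin: "finite S"
  shows "S \<subseteq> carrier M \<Longrightarrow> submodule K R M \<Longrightarrow> K \<subseteq> mspan R M S \<Longrightarrow>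
         \<exists>T. finite T \<and> T \<subseteq> K \<and> mspan R M T = K"
  using fin
proof (induction S arbitrary: K rule: finite_induct)
  case empty
  have "mspan R M {} \<subseteq> K" using mspan_least[OF empty.prems(2)] by simp
  then show ?case using empty.prems(3) by (intro exI[of _ "{}"]) auto
next
  case (insert x S)
  have x: "x \<in> carrier M" and S: "S \<subseteq> carrier M" using insert.prems(1) by auto
  note K = insert.prems(2)
  let ?P = "mspan R M S"
  have P: "submodule ?P R M" using mspan_sub_carrier[OF S] .
  have Pc: "\<And>y. y \<in> ?P \<Longrightarrow> y \<in> carrier M" using sub_carrier[OF P] .
  have Kc: "\<And>y. y \<in> K \<Longrightarrow> y \<in> carrier M" using sub_carrier[OF K] .
  let ?I = "{b \<in> carrier R. \<exists>y\<in>?P. b \<odot>\<^bsub>M\<^esub> x \<oplus>\<^bsub>M\<^esub> y \<in> K}"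
  have I: "ideal ?I R" using coef_ideal[OF K x S] .
  obtain A where A: "A \<subseteq> carrier R" "finite A" "?I = Idl A"
    using noetherian_ring.finetely_gen[OF noeth I] by blast
  have "A \<subseteq> ?I" using R.genideal_self[OF A(1)] A(3) by simp
  then have "\<forall>a\<in>A. \<exists>y. y \<in> ?P \<and> a \<odot>\<^bsub>M\<^esub> x \<oplus>\<^bsub>M\<^esub> y \<in> K" by blast
  then obtain f where f: "\<And>a. a \<in> A \<Longrightarrow> f a \<in> ?P \<and> a \<odot>\<^bsub>M\<^esub> x \<oplus>\<^bsub>M\<^esub> f a \<in> K" by metis
  define k where "k a = a \<odot>\<^bsub>M\<^esub> x \<oplus>\<^bsub>M\<^esub> f a" for a
  have kK: "k ` A \<subseteq> K" using f k_def by auto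
  have KP: "submodule (K \<inter> ?P) R M" using submodule_Int[OF K P] .
  obtain T where T: "finite T" "T \<subseteq> K \<inter> ?P" "mspan R M T = K \<inter> ?P"
    using insert.IH[OF S KP] by blast
  let ?G = "T \<union> k ` A"
  have kc: "k ` A \<subseteq> carrier M" using kK Kc by blast
  have Gc: "?G \<subseteq> carrier M" using kc T(2) Kc by blast
  have G: "submodule (mspan R M ?G) R M" using mspan_sub_carrier[OF Gc] .
  have "mspan R M ?G = K"
  proof
    show "mspan R M ?G \<subseteq> K" using T(2) kK by (intro mspan_least[OF K]) blast
  next
    show "K \<subseteq> mspan R M ?G"
    proof
      fix z assume zK: "z \<in> K"
      then have "z \<in> mspan R M (insert x S)" using insert.prems(3) by blast
      then obtain b y where z: "z = b \<odot>\<^bsub>M\<^esub> x \<oplus>\<^bsub>M\<^esub> y" "b \<in> carrier R" "y \<in> ?P"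
        using mspan_insert[OF x S] by blast
      then have "b \<in> ?I" using zK by blast
      let ?J = "{b \<in> carrier R. \<exists>y\<in>?P. b \<odot>\<^bsub>M\<^esub> x \<oplus>\<^bsub>M\<^esub> y \<in> mspan R M (k ` A)}"
      have J: "ideal ?J R" using coef_ideal[OF mspan_sub_carrier[OF kc] x S] .
      have "A \<subseteq> ?J"
      proof
        fix a assume a: "a \<in> A"
        have "k a \<in> mspan R M (k ` A)" using a mspan_super[of "k ` A" R M] by blast
        then show "a \<in> ?J" using a A(1) f[OF a] unfolding k_def by blast
      qed
      then have "Idl A \<subseteq> ?J" by (rule R.genideal_minimal[OF J])
      then have "b \<in> ?J" using \<open>b \<in> ?I\<close> A(3) by blast
      then obtain y' where y': "y' \<in> ?P" "b \<odot>\<^bsub>M\<^esub> x \<oplus>\<^bsub>M\<^esub> y' \<in> mspan R M (k ` A)" by blast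
      define w where "w = b \<odot>\<^bsub>M\<^esub> x \<oplus>\<^bsub>M\<^esub> y'"
      have wk: "w \<in> mspan R M (k ` A)" using y'(2) w_def by simp
      have kG: "mspan R M (k ` A) \<subseteq> mspan R M ?G" by (rule mspan_mono) blast
      have "mspan R M (k ` A) \<subseteq> K" by (rule mspan_least[OF K kK])
      then have wK: "w \<in> K" using wk by blast
      have d: "z \<oplus>\<^bsub>M\<^esub> \<ominus>\<^bsub>M\<^esub> w = y \<oplus>\<^bsub>M\<^esub> \<ominus>\<^bsub>M\<^esub> y'"
        unfolding z(1) w_def using sub_diff[OF z(2) x Pc[OF z(3)] Pc[OF y'(1)]] .
      have "z \<oplus>\<^bsub>M\<^esub> \<ominus>\<^bsub>M\<^esub> w \<in> K" using submoduleE(5)[OF K zK submoduleE(3)[OF K wK]] .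
      moreover have "y \<oplus>\<^bsub>M\<^esub> \<ominus>\<^bsub>M\<^esub> y' \<in> ?P" using submoduleE(5)[OF P z(3) submoduleE(3)[OF P y'(1)]] .
      ultimately have "z \<oplus>\<^bsub>M\<^esub> \<ominus>\<^bsub>M\<^esub> w \<in> mspan R M T" using d T(3) by simp
      moreover have "mspan R M T \<subseteq> mspan R M ?G" by (rule mspan_mono) blast
      ultimately have dG: "z \<oplus>\<^bsub>M\<^esub> \<ominus>\<^bsub>M\<^esub> w \<in> mspan R M ?G" by blast
      have wG: "w \<in> mspan R M ?G" using wk kG by blast
      have "z = (z \<oplus>\<^bsub>M\<^esub> \<ominus>\<^bsub>M\<^esub> w) \<oplus>\<^bsub>M\<^esub> w"
        using Kc[OF zK] Kc[OF wK] by (simp add: M.a_assoc M.l_neg)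
      then show "z \<in> mspan R M ?G" using submoduleE(5)[OF G dG wG] by simp
    qed
  qed
  moreover have "finite ?G" using T(1) A(2) by simp
  moreover have "?G \<subseteq> K" using T(2) kK by blast
  ultimately show ?case by blast
qed

end


lemma Q_carrier: "carrier (quot_module R M B) = a_rcosets\<^bsub>M\<^esub> B"
  by (simp add: quot_module_def)
lemma Q_add: "ring.add (quot_module R M B) = set_add M"
  by (simp add: quot_module_def)
lemma Q_zero: "ring.zero (quot_module R M B) = B"
  by (simp add: quot_module_def)
lemma Q_smult: "module.smult (quot_module R M B) = (\<lambda>a Y. \<Union>y\<in>Y. B +>\<^bsub>M\<^esub> (a \<odot>\<^bsub>M\<^esub> y))"
  by (simp add: quot_module_def)

locale qmod = module +
  fixes B assumes B: "submodule B R M"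
begin

lemma absub: "abelian_subgroup B M"
  by (rule abelian_subgroupI3[OF additive_subgroup.intro[OF submodule.axioms(1)[OF B]] M.abelian_group_axioms])

lemma Bc: "B \<subseteq> carrier M"
  using submoduleE(1)[OF B] .

lemma pi_carrier: "x \<in> carrier M \<Longrightarrow> B +>\<^bsub>M\<^esub> x \<in> carrier (quot_module R M B)"
  unfolding Q_carrier using a_rcosetsI[OF Bc] by simp

lemma pi_add: "x \<in> carrier M \<Longrightarrow> y \<in> carrier M \<Longrightarrow>
   ring.add (quot_module R M B) (B +>\<^bsub>M\<^esub> x) (B +>\<^bsub>M\<^esub> y) = B +>\<^bsub>M\<^esub> (x \<oplus>\<^bsub>M\<^esub> y)"
  unfolding Q_add using abelian_subgroup.a_rcos_sum[OF absub] by simp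

lemma pi_zero: "ring.zero (quot_module R M B) = B +>\<^bsub>M\<^esub> \<zero>\<^bsub>M\<^esub>"
  unfolding Q_zero using a_coset_add_zero[OF Bc] by simp

lemma pi_self: "x \<in> carrier M \<Longrightarrow> x \<in> B +>\<^bsub>M\<^esub> x"
  using abelian_subgroup.a_rcos_self[OF absub] by simp

lemma pi_eq: "x \<in> carrier M \<Longrightarrow> y \<in> carrier M \<Longrightarrow> B +>\<^bsub>M\<^esub> x = B +>\<^bsub>M\<^esub> y \<Longrightarrow> x \<oplus>\<^bsub>M\<^esub> \<ominus>\<^bsub>M\<^esub> y \<in> B"
  using abelian_subgroup.a_rcos_module[OF absub, of y x] pi_self[of x] by simp

lemma pi_inv: "x \<in> carrier M \<Longrightarrow> m_inv (add_monoid (quot_module R M B)) (B +>\<^bsub>M\<^esub> x) = B +>\<^bsub>M\<^esub> (\<ominus>\<^bsub>M\<^esub> x)"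
proof -
  assume x: "x \<in> carrier M"
  have e: "m_inv (add_monoid (quot_module R M B)) = m_inv (M A_Mod B)"
    by (rule ext) (simp add: m_inv_def A_FactGroup_def' quot_module_def)
  have "B +>\<^bsub>M\<^esub> x \<in> carrier (M A_Mod B)"
    using a_rcosetsI[OF Bc x] by (simp add: A_FactGroup_def')
  then show ?thesis
    unfolding e using abelian_subgroup.a_inv_FactGroup[OF absub] abelian_subgroup.a_rcos_inv[OF absub x]
    by simp
qed

lemma pi_smult: "a \<in> carrier R \<Longrightarrow> x \<in> carrier M \<Longrightarrow>
   module.smult (quot_module R M B) a (B +>\<^bsub>M\<^esub> x) = B +>\<^bsub>M\<^esub> (a \<odot>\<^bsub>M\<^esub> x)"
proof -
  assume a: "a \<in> carrier R" and x: "x \<in> carrier M"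
  have "B +>\<^bsub>M\<^esub> (a \<odot>\<^bsub>M\<^esub> y) = B +>\<^bsub>M\<^esub> (a \<odot>\<^bsub>M\<^esub> x)" if y: "y \<in> B +>\<^bsub>M\<^esub> x" for y
  proof -
    have yc: "y \<in> carrier M" using abelian_subgroup.a_elemrcos_carrier[OF absub x y] .
    have "y \<oplus>\<^bsub>M\<^esub> \<ominus>\<^bsub>M\<^esub> x \<in> B" using abelian_subgroup.a_rcos_module_imp[OF absub x y] .
    then have "a \<odot>\<^bsub>M\<^esub> (y \<oplus>\<^bsub>M\<^esub> \<ominus>\<^bsub>M\<^esub> x) \<in> B" using submoduleE(4)[OF B a] by blast
    moreover have "a \<odot>\<^bsub>M\<^esub> (y \<oplus>\<^bsub>M\<^esub> \<ominus>\<^bsub>M\<^esub> x) = a \<odot>\<^bsub>M\<^esub> y \<oplus>\<^bsub>M\<^esub> \<ominus>\<^bsub>M\<^esub> (a \<odot>\<^bsub>M\<^esub> x)"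
      using a x yc by (simp add: smult_r_distr smult_r_minus)
    ultimately have "a \<odot>\<^bsub>M\<^esub> y \<in> B +>\<^bsub>M\<^esub> (a \<odot>\<^bsub>M\<^esub> x)"
      using abelian_subgroup.a_rcos_module_rev[OF absub, of "a \<odot>\<^bsub>M\<^esub> x" "a \<odot>\<^bsub>M\<^esub> y"] a x yc by simp
    then show ?thesis
      using abelian_subgroup.a_repr_independence'[OF absub] a x by (metis smult_closed)
  qed
  then show ?thesis unfolding Q_smult using pi_self[OF x] by blast
qed

lemma Q_elem: "Z \<in> carrier (quot_module R M B) \<Longrightarrow> \<exists>x\<in>carrier M. Z = B +>\<^bsub>M\<^esub> x"
  unfolding Q_carrier A_RCOSETS_def RCOSETS_def a_r_coset_def by auto

end


context qmod
begin

abbreviation "Q \<equiv> quot_module R M B"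

lemma img_submodule:
  assumes L: "submodule L R M"
  shows "submodule ((\<lambda>x. B +>\<^bsub>M\<^esub> x) ` L) R Q"
proof (intro submodule.intro subgroup.intro submodule_axioms.intro)
  have Lc: "\<And>x. x \<in> L \<Longrightarrow> x \<in> carrier M" using sub_carrier[OF L] .
  show "(\<lambda>x. B +>\<^bsub>M\<^esub> x) ` L \<subseteq> carrier (add_monoid Q)"
    using pi_carrier Lc by auto
  show "U \<otimes>\<^bsub>add_monoid Q\<^esub> W \<in> (\<lambda>x. B +>\<^bsub>M\<^esub> x) ` L"
    if h: "U \<in> (\<lambda>x. B +>\<^bsub>M\<^esub> x) ` L" "W \<in> (\<lambda>x. B +>\<^bsub>M\<^esub> x) ` L" for U W
  proof -
    obtain x y where xy: "x \<in> L" "y \<in> L" "U = B +>\<^bsub>M\<^esub> x" "W = B +>\<^bsub>M\<^esub> y" using h by blast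
    have "U \<otimes>\<^bsub>add_monoid Q\<^esub> W = B +>\<^bsub>M\<^esub> (x \<oplus>\<^bsub>M\<^esub> y)"
      using pi_add[OF Lc[OF xy(1)] Lc[OF xy(2)]] xy by simp
    then show ?thesis using submoduleE(5)[OF L xy(1,2)] by simp
  qed
  show "\<one>\<^bsub>add_monoid Q\<^esub> \<in> (\<lambda>x. B +>\<^bsub>M\<^esub> x) ` L"
    using pi_zero submodule_zero[OF L] by simp
  show "inv\<^bsub>add_monoid Q\<^esub> U \<in> (\<lambda>x. B +>\<^bsub>M\<^esub> x) ` L"
    if h: "U \<in> (\<lambda>x. B +>\<^bsub>M\<^esub> x) ` L" for U
  proof -
    obtain x where x: "x \<in> L" "U = B +>\<^bsub>M\<^esub> x" using h by blast
    have "inv\<^bsub>add_monoid Q\<^esub> U = B +>\<^bsub>M\<^esub> (\<ominus>\<^bsub>M\<^esub> x)" using pi_inv[OF Lc[OF x(1)]] x(2) by simp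
    then show ?thesis using submoduleE(3)[OF L x(1)] by simp
  qed
  show "a \<odot>\<^bsub>Q\<^esub> U \<in> (\<lambda>x. B +>\<^bsub>M\<^esub> x) ` L"
    if h: "a \<in> carrier R" "U \<in> (\<lambda>x. B +>\<^bsub>M\<^esub> x) ` L" for a U
  proof -
    obtain x where x: "x \<in> L" "U = B +>\<^bsub>M\<^esub> x" using h(2) by blast
    have "a \<odot>\<^bsub>Q\<^esub> U = B +>\<^bsub>M\<^esub> (a \<odot>\<^bsub>M\<^esub> x)" using pi_smult[OF h(1) Lc[OF x(1)]] x(2) by simp
    then show ?thesis using submoduleE(4)[OF L h(1) x(1)] by simp
  qed
qed

lemma preimage_submodule:
  assumes V: "submodule V R Q"
  shows "submodule {x \<in> carrier M. B +>\<^bsub>M\<^esub> x \<in> V} R M"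
proof (rule submoduleI)
  have sg: "subgroup V (add_monoid Q)" using submodule.axioms(1)[OF V] .
  show "{x \<in> carrier M. B +>\<^bsub>M\<^esub> x \<in> V} \<subseteq> carrier M" by blast
  have "\<one>\<^bsub>add_monoid Q\<^esub> \<in> V" using subgroup.one_closed[OF sg] .
  then show "\<zero>\<^bsub>M\<^esub> \<in> {x \<in> carrier M. B +>\<^bsub>M\<^esub> x \<in> V}" using pi_zero by simp
  fix x assume x: "x \<in> {x \<in> carrier M. B +>\<^bsub>M\<^esub> x \<in> V}"
  have "inv\<^bsub>add_monoid Q\<^esub> (B +>\<^bsub>M\<^esub> x) \<in> V" using subgroup.m_inv_closed[OF sg] x by blast
  then show "\<ominus>\<^bsub>M\<^esub> x \<in> {x \<in> carrier M. B +>\<^bsub>M\<^esub> x \<in> V}" using pi_inv x by simp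
next
  have sg: "subgroup V (add_monoid Q)" using submodule.axioms(1)[OF V] .
  fix x y assume x: "x \<in> {x \<in> carrier M. B +>\<^bsub>M\<^esub> x \<in> V}" and y: "y \<in> {x \<in> carrier M. B +>\<^bsub>M\<^esub> x \<in> V}"
  have "(B +>\<^bsub>M\<^esub> x) \<otimes>\<^bsub>add_monoid Q\<^esub> (B +>\<^bsub>M\<^esub> y) \<in> V" using subgroup.m_closed[OF sg] x y by blast
  then show "x \<oplus>\<^bsub>M\<^esub> y \<in> {x \<in> carrier M. B +>\<^bsub>M\<^esub> x \<in> V}" using pi_add x y by simp
next
  fix a x assume a: "a \<in> carrier R" and x: "x \<in> {x \<in> carrier M. B +>\<^bsub>M\<^esub> x \<in> V}"
  have "a \<odot>\<^bsub>Q\<^esub> (B +>\<^bsub>M\<^esub> x) \<in> V" using submodule.smult_closed[OF V a] x by blast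
  then show "a \<odot>\<^bsub>M\<^esub> x \<in> {x \<in> carrier M. B +>\<^bsub>M\<^esub> x \<in> V}" using pi_smult a x by simp
qed

end


context qmod
begin

lemma submod_iff: "submodule N R (submod M B) \<longleftrightarrow> submodule N R M \<and> N \<subseteq> B"
proof
  have am: "add_monoid (submod M B) = (add_monoid M)\<lparr>carrier := B\<rparr>" by (simp add: submod_def)
  have sB: "subgroup B (add_monoid M)" using submodule.axioms(1)[OF B] .
  {
    assume h: "submodule N R (submod M B)"
    have sg: "subgroup N ((add_monoid M)\<lparr>carrier := B\<rparr>)" using submodule.axioms(1)[OF h] am by simp
    have sgM: "subgroup N (add_monoid M)" using group.incl_subgroup[OF M.a_group sB sg] .
    have NB: "N \<subseteq> B" using subgroup.subset[OF sg] by simp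
    have "submodule N R M"
    proof (intro submodule.intro submodule_axioms.intro sgM)
      fix a x assume "a \<in> carrier R" "x \<in> N"
      then show "a \<odot>\<^bsub>M\<^esub> x \<in> N" using submodule.smult_closed[OF h] by (simp add: submod_def)
    qed
    then show "submodule N R M \<and> N \<subseteq> B" using NB by simp
  }
  {
    assume h: "submodule N R M \<and> N \<subseteq> B"
    have sgM: "subgroup N (add_monoid M)" using submodule.axioms(1)[of N R M] h by simp
    have sg: "subgroup N ((add_monoid M)\<lparr>carrier := B\<rparr>)"
      by (rule group.subgroup_incl[OF M.a_group sgM sB]) (use h in simp)
    show "submodule N R (submod M B)"
    proof (intro submodule.intro submodule_axioms.intro)
      show "subgroup N (add_monoid (submod M B))" using sg am by simp
      fix a x assume "a \<in> carrier R" "x \<in> N"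
      moreover have hN: "submodule N R M" using h by simp
      ultimately show "a \<odot>\<^bsub>submod M B\<^esub> x \<in> N" using submodule.smult_closed[OF hN] by (simp add: submod_def)
    qed
  }
qed

lemma mspan_submod:
  assumes SB: "S \<subseteq> B"
  shows "mspan R (submod M B) S = mspan R M S"
proof
  have Sc: "S \<subseteq> carrier M" using SB Bc by blast
  have P: "submodule (mspan R M S) R M" using mspan_sub_carrier[OF Sc] .
  have "mspan R M S \<subseteq> B" using mspan_least[OF B SB] .
  then have "submodule (mspan R M S) R (submod M B)" using submod_iff[of "mspan R M S"] P by simp
  then show "mspan R (submod M B) S \<subseteq> mspan R M S" by (rule mspan_least[OF _ mspan_super])
next
  have "submodule B R (submod M B)" using submod_iff[of B] B by simp
  then have "submodule (mspan R (submod M B) S) R (submod M B)" using SB by (rule mspan_submodule)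
  then have "submodule (mspan R (submod M B) S) R M" using submod_iff[of "mspan R (submod M B) S"] by simp
  then show "mspan R M S \<subseteq> mspan R (submod M B) S" by (rule mspan_least[OF _ mspan_super])
qed

lemma main_bound:
  assumes noeth: "noetherian_ring R"
    and hs: "\<forall>N. fg_submodule R (submod M B) N \<longrightarrow> (\<exists>S. finite S \<and> card S \<le> s \<and> generates R (submod M B) S N)"
    and ht: "\<forall>N. fg_submodule R Q N \<longrightarrow> (\<exists>S. finite S \<and> card S \<le> t \<and> generates R Q S N)"
    and N: "fg_submodule R M N"
  shows "\<exists>S. finite S \<and> card S \<le> s + t \<and> generates R M S N"
proof -
  have NM: "submodule N R M" using N unfolding fg_submodule_def by blast
  obtain G0 where G0: "finite G0" "G0 \<subseteq> N" "mspan R M G0 = N"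
    using N unfolding fg_submodule_def generates_def by blast
  have Nc: "\<And>x. x \<in> N \<Longrightarrow> x \<in> carrier M" using sub_carrier[OF NM] .
  have G0c: "G0 \<subseteq> carrier M" using G0(2) Nc by blast
  have NB: "submodule (N \<inter> B) R M" using submodule_Int[OF NM B] .
  have "N \<inter> B \<subseteq> mspan R M G0" using G0(3) by blast
  then obtain T0 where T0: "finite T0" "T0 \<subseteq> N \<inter> B" "mspan R M T0 = N \<inter> B"
    using noeth_fg[OF noeth G0(1) G0c NB] by blast
  have T0B: "T0 \<subseteq> B" using T0(2) by blast
  have "submodule (N \<inter> B) R (submod M B)" using submod_iff[of "N \<inter> B"] NB by simp
  moreover have "mspan R (submod M B) T0 = N \<inter> B" using mspan_submod[OF T0B] T0(3) by simp
  ultimately have "fg_submodule R (submod M B) (N \<inter> B)"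
    unfolding fg_submodule_def generates_def using T0 by blast
  then obtain T where T: "finite T" "card T \<le> s" "generates R (submod M B) T (N \<inter> B)"
    using hs by blast
  have TNB: "T \<subseteq> N \<inter> B" using T(3) unfolding generates_def by blast
  have "T \<subseteq> B" using TNB by blast
  then have T': "mspan R M T = N \<inter> B" using T(3) mspan_submod[OF \<open>T \<subseteq> B\<close>] unfolding generates_def by simp
  let ?pi = "\<lambda>x. B +>\<^bsub>M\<^esub> x"
  let ?V = "?pi ` N"
  have V: "submodule ?V R Q" using img_submodule[OF NM] .
  have VG: "mspan R Q (?pi ` G0) = ?V"
  proof
    show "mspan R Q (?pi ` G0) \<subseteq> ?V" by (rule mspan_least[OF V]) (use G0(2) in blast)
  next
    have W: "submodule (mspan R Q (?pi ` G0)) R Q" by (rule mspan_submodule[OF V]) (use G0(2) in blast)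
    have PP: "submodule {x \<in> carrier M. ?pi x \<in> mspan R Q (?pi ` G0)} R M"
      using preimage_submodule[OF W] .
    have GG: "G0 \<subseteq> {x \<in> carrier M. ?pi x \<in> mspan R Q (?pi ` G0)}"
      using G0c mspan_super[of "?pi ` G0" R Q] by blast
    have "mspan R M G0 \<subseteq> {x \<in> carrier M. ?pi x \<in> mspan R Q (?pi ` G0)}"
      by (rule mspan_least[OF PP GG])
    then have "N \<subseteq> {x \<in> carrier M. ?pi x \<in> mspan R Q (?pi ` G0)}"
      using G0(3) by simp
    then show "?V \<subseteq> mspan R Q (?pi ` G0)" by blast
  qed
  have "finite (?pi ` G0)" using G0(1) by simp
  moreover have "?pi ` G0 \<subseteq> ?V" using G0(2) by blast
  ultimately have "fg_submodule R Q ?V"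
    unfolding fg_submodule_def generates_def using V VG by blast
  then obtain Sb where Sb: "finite Sb" "card Sb \<le> t" "generates R Q Sb ?V"
    using ht by blast
  have SbV: "Sb \<subseteq> ?V" and SbG: "mspan R Q Sb = ?V" using Sb(3) unfolding generates_def by auto
  have "\<forall>U\<in>Sb. \<exists>n. n \<in> N \<and> U = ?pi n" using SbV by blast
  then obtain r where r: "\<And>U. U \<in> Sb \<Longrightarrow> r U \<in> N \<and> U = ?pi (r U)" by metis
  let ?Y = "r ` Sb"
  have YN: "?Y \<subseteq> N" using r by blast
  have Yc: "?Y \<subseteq> carrier M" using YN Nc by blast
  have cY: "card ?Y \<le> t" using card_image_le[OF Sb(1), of r] Sb(2) by linarith
  have PY: "submodule (mspan R M ?Y) R M" using mspan_sub_carrier[OF Yc] .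
  have "Sb \<subseteq> ?pi ` mspan R M ?Y"
  proof
    fix U assume U: "U \<in> Sb"
    then have "r U \<in> mspan R M ?Y" using mspan_super[of ?Y R M] by blast
    then show "U \<in> ?pi ` mspan R M ?Y" using r[OF U] by blast
  qed
  then have "mspan R Q Sb \<subseteq> ?pi ` mspan R M ?Y"
    by (rule mspan_least[OF img_submodule[OF PY]])
  then have VY: "?V \<subseteq> ?pi ` mspan R M ?Y" using SbG by simp
  let ?S = "?Y \<union> T"
  have SN: "?S \<subseteq> N" using YN TNB by blast
  have Sc: "?S \<subseteq> carrier M" using SN Nc by blast
  have PS: "submodule (mspan R M ?S) R M" using mspan_sub_carrier[OF Sc] .
  have "mspan R M ?S = N"
  proof
    show "mspan R M ?S \<subseteq> N" using mspan_least[OF NM SN] .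
  next
    show "N \<subseteq> mspan R M ?S"
    proof
      fix n assume n: "n \<in> N"
      then have "?pi n \<in> ?pi ` mspan R M ?Y" using VY by blast
      then obtain y where y: "y \<in> mspan R M ?Y" "?pi n = ?pi y" by auto
      have yN: "y \<in> N" using y(1) mspan_least[OF NM YN] by blast
      have yc: "y \<in> carrier M" using Nc[OF yN] .
      have d: "n \<oplus>\<^bsub>M\<^esub> \<ominus>\<^bsub>M\<^esub> y \<in> B" using pi_eq[OF Nc[OF n] yc y(2)] .
      have "n \<oplus>\<^bsub>M\<^esub> \<ominus>\<^bsub>M\<^esub> y \<in> N" using submoduleE(5)[OF NM n submoduleE(3)[OF NM yN]] .
      with d have "n \<oplus>\<^bsub>M\<^esub> \<ominus>\<^bsub>M\<^esub> y \<in> mspan R M T" using T' by blast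
      moreover have "mspan R M T \<subseteq> mspan R M ?S" by (rule mspan_mono) blast
      ultimately have d1: "n \<oplus>\<^bsub>M\<^esub> \<ominus>\<^bsub>M\<^esub> y \<in> mspan R M ?S" by blast
      have "mspan R M ?Y \<subseteq> mspan R M ?S" by (rule mspan_mono) blast
      then have d2: "y \<in> mspan R M ?S" using y(1) by blast
      have "n = (n \<oplus>\<^bsub>M\<^esub> \<ominus>\<^bsub>M\<^esub> y) \<oplus>\<^bsub>M\<^esub> y"
        using Nc[OF n] yc by (simp add: M.a_assoc M.l_neg)
      then show "n \<in> mspan R M ?S" using submoduleE(5)[OF PS d1 d2] by simp
    qed
  qed
  moreover have "finite ?S" using Sb(1) T(1) by simp
  moreover have "card ?S \<le> s + t"
    using card_Un_le[of ?Y T] cY T(2) by linarith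
  ultimately show ?thesis using SN unfolding generates_def by blast
qed

end


context module
begin

lemma exists_rank:
  assumes "\<forall>N. fg_submodule R M N \<longrightarrow> (\<exists>S. finite S \<and> card S \<le> k \<and> generates R M S N)"
  shows "\<exists>r\<le>k. has_special_rank R M r"
proof -
  define P where "P r \<longleftrightarrow> (\<forall>N. fg_submodule R M N \<longrightarrow> (\<exists>S. finite S \<and> card S \<le> r \<and> generates R M S N))" for r
  have Pk: "P k" using assms unfolding P_def by simp
  define r0 where "r0 = (LEAST r. P r)"
  have P0: "P r0" using LeastI[of P k, OF Pk] unfolding r0_def .
  have le: "r0 \<le> k" using Least_le[of P k, OF Pk] unfolding r0_def .
  have ex: "\<exists>N S. fg_submodule R M N \<and> minimal_generating R M S N \<and> finite S \<and> card S = r0"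
  proof (cases r0)
    case 0
    let ?N = "mspan R M {}"
    have sN: "submodule ?N R M" using mspan_sub_carrier[of "{}"] by simp
    have g: "generates R M {} ?N" unfolding generates_def by simp
    have "fg_submodule R M ?N" unfolding fg_submodule_def using sN g by blast
    moreover have "minimal_generating R M {} ?N" unfolding minimal_generating_def using g by blast
    ultimately show ?thesis using 0 by (intro exI[of _ ?N] exI[of _ "{}"]) simp
  next
    case (Suc r')
    have "\<not> P r'" using not_less_Least[of r' P] unfolding r0_def[symmetric] using Suc by simp
    then obtain N where N: "fg_submodule R M N"
      and nr: "\<And>S. finite S \<Longrightarrow> card S \<le> r' \<Longrightarrow> \<not> generates R M S N" unfolding P_def by blast
    obtain S where S: "finite S" "card S \<le> r0" "generates R M S N" using P0 N unfolding P_def by blast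
    have cS: "card S = r0" using nr[OF S(1)] S(2,3) Suc by fastforce
    have "minimal_generating R M S N"
      unfolding minimal_generating_def
    proof (intro conjI allI impI)
      show "generates R M S N" using S(3) .
      fix T assume T: "T \<subset> S"
      have "finite T" using T S(1) finite_subset by blast
      moreover have "card T < card S" using psubset_card_mono[OF S(1) T] .
      ultimately show "\<not> generates R M T N" using nr cS Suc by simp
    qed
    then show ?thesis using N S(1) cS by blast
  qed
  show ?thesis using P0 le ex unfolding has_special_rank_def P_def by blast
qed

end

lemma special_rank_finite:
  assumes "special_rank R M \<noteq> \<infinity>"
  shows "has_special_rank R M (LEAST r. has_special_rank R M r)"
    and "special_rank R M = enat (LEAST r. has_special_rank R M r)"
proof -
  have ex: "\<exists>r. has_special_rank R M r"
    using assms unfolding special_rank_def by (auto split: if_splits)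
  then show "has_special_rank R M (LEAST r. has_special_rank R M r)" by (rule LeastI_ex)
  show "special_rank R M = enat (LEAST r. has_special_rank R M r)"
    using ex unfolding special_rank_def by simp
qed

theorem lemma2:
  fixes R :: "'a ring" and A :: "('a, 'b) module" and B :: "'b set"
  assumes "noetherian_ring R"
    and "module R A"
    and "submodule B R A"
    and "special_rank R (submod A B) \<noteq> \<infinity>"
    and "special_rank R (quot_module R A B) \<noteq> \<infinity>"
  shows "special_rank R A \<le> special_rank R (submod A B) + special_rank R (quot_module R A B)"
proof -
  interpret qmod R A B by (intro qmod.intro qmod_axioms.intro assms(2) assms(3))
  define s where "s = (LEAST r. has_special_rank R (submod A B) r)"
  define t where "t = (LEAST r. has_special_rank R (quot_module R A B) r)"
  have hs: "has_special_rank R (submod A B) s" and es: "special_rank R (submod A B) = enat s"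
    using special_rank_finite[OF assms(4)] unfolding s_def by auto
  have ht: "has_special_rank R (quot_module R A B) t" and et: "special_rank R (quot_module R A B) = enat t"
    using special_rank_finite[OF assms(5)] unfolding t_def by auto
  have "\<forall>N. fg_submodule R A N \<longrightarrow> (\<exists>S. finite S \<and> card S \<le> s + t \<and> generates R A S N)"
  proof (intro allI impI)
    fix N assume N: "fg_submodule R A N"
    show "\<exists>S. finite S \<and> card S \<le> s + t \<and> generates R A S N"
      by (rule main_bound[OF assms(1) _ _ N])
         (use hs ht in \<open>simp_all add: has_special_rank_def\<close>)
  qed
  then obtain r where r: "r \<le> s + t" "has_special_rank R A r" using exists_rank by blast
  have "special_rank R A = enat (LEAST r. has_special_rank R A r)"
    using r(2) unfolding special_rank_def by auto
  also have "\<dots> \<le> enat r" using Least_le[of "has_special_rank R A", OF r(2)] by simp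
  also have "\<dots> \<le> enat (s + t)" using r(1) by simp
  also have "\<dots> = special_rank R (submod A B) + special_rank R (quot_module R A B)"
    using es et by simp
  finally show ?thesis .
qed


end
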